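(* For any solution $(w,F)\in X\times\mathbb R$ of the height equation, with $h=H+w$ and $\eta(q)=w(q,0)$, $$\frac1{F^2}\Big[\int_{-1}^0|\rho_p|\,w(0,p)^2\,dp+\rho(0)\eta(0)^2\Big]=\int_{-1}^0\frac{w_p(0,p)^2}{H_p(p)^2\,h_p(0,p)}\,dp.$$
   Context: Fix $\alpha\in(0,1)$, $\rho\in C^{2+\alpha}([-1,0])$ with $\rho>0$, $\rho_p\le0$, and $H\in C^{3+\alpha}([-1,0])$ with $H(-1)=0$, $H(0)=1$, $H_p>0$. Let $R=\mathbb R\times(-1,0)$ (coordinates $(q,p)$), $T=\mathbb R\times\{0\}$, $B=\mathbb R\times\{-1\}$. $(w,F)$ solves the height equation if $h=H+w$ satisfies $\big(-\frac{1+h_q^2}{2h_p^2}+\frac1{2H_p^2}\big)_p+\big(\frac{h_q}{h_p}\big)_q-\frac1{F^2}\rho_p(h-H)=0$ in $R$, $\frac{1+h_q^2}{2h_p^2}-\frac1{2H_p^2}+\frac1{F^2}\rho(h-1)=0$ on $T$, $h=0$ on $B$, and $0<\inf_R(H_p+w_p)<\infty$. $X$: $w\in C^{3+\alpha}(\overline R)$ of finite norm, even in $q$, with $w$ and derivatives of order $\le2$ tending to $0$ uniformly as $|q|\to\infty$, $w=0$ on $B$. *)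

theory Defs
  imports "HOL-Analysis.Analysis"
begin

definition strip_cl :: "(real \<times> real) set" where
  "strip_cl = {(q,p). -1 \<le> p \<and> p \<le> 0}"

definition dP :: "(real \<Rightarrow> real) \<Rightarrow> real \<Rightarrow> real" where
  "dP g p = vector_derivative g (at p within {-1..0})"

definition pq :: "(real \<Rightarrow> real \<Rightarrow> real) \<Rightarrow> real \<Rightarrow> real \<Rightarrow> real" where
  "pq f q p = deriv (\<lambda>x. f x p) q"

definition pp :: "(real \<Rightarrow> real \<Rightarrow> real) \<Rightarrow> real \<Rightarrow> real \<Rightarrow> real" where
  "pp f q p = vector_derivative (\<lambda>y. f q y) (at p within {-1..0})"

text \<open>Iterated partial derivative; True = d/dq, False = d/dp (applied right to left).\<close>
fun pd :: "bool list \<Rightarrow> (real \<Rightarrow> real \<Rightarrow> real) \<Rightarrow> real \<Rightarrow> real \<Rightarrow> real" where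
  "pd [] f = f"
| "pd (True # ds) f = pq (pd ds f)"
| "pd (False # ds) f = pp (pd ds f)"

definition diff_dir :: "bool \<Rightarrow> (real \<Rightarrow> real \<Rightarrow> real) \<Rightarrow> real \<Rightarrow> real \<Rightarrow> bool" where
  "diff_dir d f q p = (if d then (\<lambda>x. f x p) differentiable (at q)
                       else (\<lambda>y. f q y) differentiable (at p within {-1..0}))"

definition holder_strip :: "nat \<Rightarrow> real \<Rightarrow> (real \<Rightarrow> real \<Rightarrow> real) \<Rightarrow> bool" where
  "holder_strip k \<alpha> f \<longleftrightarrow>
     (\<forall>ds d q p. length ds < k \<and> -1 \<le> p \<and> p \<le> 0 \<longrightarrow> diff_dir d (pd ds f) q p) \<and>
     (\<forall>ds. length ds \<le> k \<longrightarrow>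
        continuous_on strip_cl (\<lambda>(q,p). pd ds f q p) \<and>
        bounded ((\<lambda>(q,p). pd ds f q p) ` strip_cl)) \<and>
     (\<forall>ds. length ds = k \<longrightarrow> (\<exists>C. \<forall>x\<in>strip_cl. \<forall>y\<in>strip_cl.
        \<bar>pd ds f (fst x) (snd x) - pd ds f (fst y) (snd y)\<bar> \<le> C * dist x y powr \<alpha>))"

definition holder_int :: "nat \<Rightarrow> real \<Rightarrow> (real \<Rightarrow> real) \<Rightarrow> bool" where
  "holder_int k \<alpha> g \<longleftrightarrow>
     (\<forall>n<k. \<forall>p\<in>{-1..0}. ((dP ^^ n) g) differentiable (at p within {-1..0})) \<and>
     (\<forall>n\<le>k. continuous_on {-1..0} ((dP ^^ n) g)) \<and>
     (\<exists>C. \<forall>x\<in>{-1..0}. \<forall>y\<in>{-1..0}. \<bar>(dP ^^ k) g x - (dP ^^ k) g y\<bar> \<le> C * \<bar>x - y\<bar> powr \<alpha>)"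

definition in_X :: "real \<Rightarrow> (real \<Rightarrow> real \<Rightarrow> real) \<Rightarrow> bool" where
  "in_X \<alpha> w \<longleftrightarrow>
     holder_strip 3 \<alpha> w \<and>
     (\<forall>q p. -1 \<le> p \<and> p \<le> 0 \<longrightarrow> w (-q) p = w q p) \<and>
     (\<forall>ds. length ds \<le> 2 \<longrightarrow> (\<forall>\<epsilon>>0. \<exists>M. \<forall>q p. M \<le> \<bar>q\<bar> \<and> -1 \<le> p \<and> p \<le> 0 \<longrightarrow>
        \<bar>pd ds w q p\<bar> < \<epsilon>)) \<and>
     (\<forall>q. w q (-1) = 0)"

text \<open>(w,F) solves the height equation (F \<noteq> 0 is implicit in the 1/F^2 terms).\<close>
definition height_eq :: "(real \<Rightarrow> real) \<Rightarrow> (real \<Rightarrow> real) \<Rightarrow> (real \<Rightarrow> real \<Rightarrow> real) \<Rightarrow> real \<Rightarrow> bool" where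
  "height_eq \<rho> H w F \<longleftrightarrow>
    (let h = (\<lambda>q p. H p + w q p);
         A = (\<lambda>q p. - (1 + (pq h q p)^2) / (2 * (pp h q p)^2) + 1 / (2 * (dP H p)^2));
         B = (\<lambda>q p. pq h q p / pp h q p)
     in F \<noteq> 0 \<and>
        (\<forall>q p. -1 < p \<and> p < 0 \<longrightarrow>
           pp A q p + pq B q p - 1 / F^2 * dP \<rho> p * (h q p - H p) = 0) \<and>
        (\<forall>q. (1 + (pq h q 0)^2) / (2 * (pp h q 0)^2) - 1 / (2 * (dP H 0)^2)
              + 1 / F^2 * \<rho> 0 * (h q 0 - 1) = 0) \<and>
        (\<forall>q. h q (-1) = 0) \<and>
        (\<exists>c>0. \<forall>q p. -1 < p \<and> p < 0 \<longrightarrow> c \<le> pp h q p))"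

end

theory Submission
imports Defs
begin

lemma strip_cl_eq: "strip_cl = UNIV \<times> {-1..0::real}"
  by (auto simp: strip_cl_def)

lemma clairaut:
  fixes f fx fy fxy fyx :: "real \<Rightarrow> real \<Rightarrow> real"
  assumes "lo < p" "p < hi"
  and dx: "\<And>x y. lo < y \<Longrightarrow> y < hi \<Longrightarrow> ((\<lambda>x. f x y) has_real_derivative fx x y) (at x)"
  and dy: "\<And>x y. lo < y \<Longrightarrow> y < hi \<Longrightarrow> ((\<lambda>y. f x y) has_real_derivative fy x y) (at y)"
  and dxy: "\<And>x y. lo < y \<Longrightarrow> y < hi \<Longrightarrow> ((\<lambda>y. fx x y) has_real_derivative fxy x y) (at y)"
  and dyx: "\<And>x y. lo < y \<Longrightarrow> y < hi \<Longrightarrow> ((\<lambda>x. fy x y) has_real_derivative fyx x y) (at x)"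
  and c1: "\<And>e. e > 0 \<Longrightarrow> \<exists>d>0. \<forall>x y. \<bar>x - q\<bar> < d \<and> \<bar>y - p\<bar> < d \<longrightarrow> \<bar>fxy x y - fxy q p\<bar> < e"
  and c2: "\<And>e. e > 0 \<Longrightarrow> \<exists>d>0. \<forall>x y. \<bar>x - q\<bar> < d \<and> \<bar>y - p\<bar> < d \<longrightarrow> \<bar>fyx x y - fyx q p\<bar> < e"
  shows "fxy q p = fyx q p"
proof -
  have key: "\<bar>fxy q p - fyx q p\<bar> < 2 * e" if e: "e > 0" for e
  proof -
    obtain d1 where d1: "d1 > 0" "\<forall>x y. \<bar>x - q\<bar> < d1 \<and> \<bar>y - p\<bar> < d1 \<longrightarrow> \<bar>fxy x y - fxy q p\<bar> < e"
      using c1[OF e] by blast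
    obtain d2 where d2: "d2 > 0" "\<forall>x y. \<bar>x - q\<bar> < d2 \<and> \<bar>y - p\<bar> < d2 \<longrightarrow> \<bar>fyx x y - fyx q p\<bar> < e"
      using c2[OF e] by blast
    define m where "m = min (min d1 d2) (min (p - lo) (hi - p))"
    have m: "m \<le> d1" "m \<le> d2" "m \<le> hi - p" "m > 0" using d1 d2 assms(1,2) by (auto simp: m_def)
    define s where "s = m / 2"
    have s: "s > 0" "s < d1" "s < d2" "p + s < hi" "lo < p"
      using m assms(1,2) unfolding s_def by linarith+
    define D where "D = f (q+s) (p+s) - f (q+s) p - f q (p+s) + f q p"
    have "\<exists>z>q. z < q + s \<and> (f (q+s) (p+s) - f (q+s) p) - (f q (p+s) - f q p)
            = (q + s - q) * (fx z (p+s) - fx z p)"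
      by (rule MVT2) (use s in \<open>auto intro!: derivative_eq_intros dx\<close>)
    then obtain \<xi> where xi: "q < \<xi>" "\<xi> < q + s" "D = s * (fx \<xi> (p+s) - fx \<xi> p)"
      unfolding D_def by auto
    have "\<exists>z>p. z < p + s \<and> fx \<xi> (p+s) - fx \<xi> p = (p + s - p) * fxy \<xi> z"
      by (rule MVT2) (use s in \<open>auto intro!: dxy\<close>)
    then obtain \<eta> where eta: "p < \<eta>" "\<eta> < p + s" "fx \<xi> (p+s) - fx \<xi> p = s * fxy \<xi> \<eta>"
      by auto
    have "\<exists>z>p. z < p + s \<and> (f (q+s) (p+s) - f q (p+s)) - (f (q+s) p - f q p)
            = (p + s - p) * (fy (q+s) z - fy q z)"
      by (rule MVT2) (use s in \<open>auto intro!: derivative_eq_intros dy\<close>)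
    then obtain \<eta>' where eta': "p < \<eta>'" "\<eta>' < p + s" "D = s * (fy (q+s) \<eta>' - fy q \<eta>')"
      unfolding D_def by (auto simp: algebra_simps)
    have "\<exists>z>q. z < q + s \<and> fy (q+s) \<eta>' - fy q \<eta>' = (q + s - q) * fyx z \<eta>'"
      by (rule MVT2) (use s eta' in \<open>auto intro!: dyx\<close>)
    then obtain \<xi>' where xi': "q < \<xi>'" "\<xi>' < q + s" "fy (q+s) \<eta>' - fy q \<eta>' = s * fyx \<xi>' \<eta>'"
      by auto
    have "s * (s * fxy \<xi> \<eta>) = s * (s * fyx \<xi>' \<eta>')" using xi eta eta' xi' by simp
    then have eq: "fxy \<xi> \<eta> = fyx \<xi>' \<eta>'" using s(1) by simp
    have "\<bar>fxy \<xi> \<eta> - fxy q p\<bar> < e" using d1(2) xi eta s by auto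
    moreover have "\<bar>fyx \<xi>' \<eta>' - fyx q p\<bar> < e" using d2(2) xi' eta' s by auto
    ultimately show ?thesis using eq by linarith
  qed
  show ?thesis
  proof (rule ccontr)
    assume "fxy q p \<noteq> fyx q p"
    then have "\<bar>fxy q p - fyx q p\<bar> / 2 > 0" by simp
    from key[OF this] show False by simp
  qed
qed

lemma ineq:
  fixes c m B h r K a P x e FF :: real
  assumes "c > 0" "m > 0" "c \<le> B" "m \<le> h" "\<bar>r\<bar> \<le> K" "\<bar>a\<bar> \<le> e" "\<bar>P\<bar> \<le> e" "\<bar>x\<bar> \<le> e" "FF \<noteq> 0"
  shows "\<bar>a^2/(2*B) - P^2/(2*B*h^2) - r*x^2/(2*FF^2)\<bar> \<le> e^2*(1/(2*c) + 1/(2*c*m^2) + K/(2*FF^2))"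
proof -
  have a2: "a^2 \<le> e^2" using assms(6) by (metis abs_le_square_iff abs_of_nonneg abs_ge_zero order_trans abs_le_D1 power2_abs power_mono)
  have P2: "P^2 \<le> e^2" using assms(7) by (metis abs_ge_zero order_trans power2_abs power_mono)
  have x2: "x^2 \<le> e^2" using assms(8) by (metis abs_ge_zero order_trans power2_abs power_mono)
  have t1: "a^2/(2*B) \<le> e^2/(2*c)" by (rule frac_le) (use a2 assms in auto)
  have t1': "0 \<le> a^2/(2*B)" using assms by auto
  have "m^2 \<le> h^2" using assms by (intro power_mono) auto
  then have "c*m^2 \<le> B*h^2" using assms by (intro mult_mono) auto
  then have t2: "P^2/(2*B*h^2) \<le> e^2/(2*c*m^2)" by (intro frac_le) (use P2 assms in auto)
  have t2': "0 \<le> P^2/(2*B*h^2)" using assms by auto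
  have "\<bar>r*x^2/(2*FF^2)\<bar> = \<bar>r\<bar>*x^2/(2*FF^2)" by (simp add: abs_mult)
  also have "\<dots> \<le> K*e^2/(2*FF^2)" using assms x2
    by (intro divide_right_mono mult_mono) auto
  finally have t3: "\<bar>r*x^2/(2*FF^2)\<bar> \<le> K*e^2/(2*FF^2)" .
  have "\<bar>a^2/(2*B) - P^2/(2*B*h^2) - r*x^2/(2*FF^2)\<bar> \<le> e^2/(2*c) + e^2/(2*c*m^2) + K*e^2/(2*FF^2)"
    using t1 t1' t2 t2' t3 by linarith
  also have "\<dots> = e^2*(1/(2*c) + 1/(2*c*m^2) + K/(2*FF^2))" by (simp add: algebra_simps)
  finally show ?thesis .
qed

locale hsetup =
  fixes \<alpha> F :: real and \<rho> H :: "real \<Rightarrow> real" and w :: "real \<Rightarrow> real \<Rightarrow> real"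
  assumes rho: "holder_int 2 \<alpha> \<rho>" and rhop: "\<forall>p\<in>{-1..0}. dP \<rho> p \<le> 0"
    and Hh: "holder_int 3 \<alpha> H" and H0: "H 0 = 1" and Hp: "\<forall>p\<in>{-1..0}. dP H p > 0"
    and X: "in_X \<alpha> w" and E: "height_eq \<rho> H w F"
begin

lemma hs: "holder_strip 3 \<alpha> w" using X unfolding in_X_def by (rule conjunct1)

lemmas hs1 = hs[unfolded holder_strip_def, THEN conjunct1, rule_format]
lemmas hs2 = hs[unfolded holder_strip_def, THEN conjunct2, THEN conjunct1, rule_format]

lemma dq: assumes "length ds \<le> 2" "-1 \<le> p" "p \<le> 0"
  shows "((\<lambda>x. pd ds w x p) has_real_derivative pd (True#ds) w q p) (at q)"
proof -
  have "diff_dir True (pd ds w) q p" using assms by (intro hs1) auto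
  then have "(\<lambda>x. pd ds w x p) differentiable (at q)" by (simp add: diff_dir_def)
  then show ?thesis by (simp add: pq_def DERIV_deriv_iff_real_differentiable)
qed

lemma dpw: assumes "length ds \<le> 2" "-1 \<le> p" "p \<le> 0"
  shows "((\<lambda>y. pd ds w q y) has_real_derivative pd (False#ds) w q p) (at p within {-1..0})"
proof -
  have "diff_dir False (pd ds w) q p" using assms by (intro hs1) auto
  then have "(\<lambda>y. pd ds w q y) differentiable (at p within {-1..0})" by (simp add: diff_dir_def)
  then show ?thesis unfolding has_real_derivative_iff_has_vector_derivative
    by (simp add: pp_def vector_derivative_works[symmetric])
qed

lemma dpa: assumes "length ds \<le> 2" "-1 < p" "p < 0"
  shows "((\<lambda>y. pd ds w q y) has_real_derivative pd (False#ds) w q p) (at p)"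
proof -
  have i: "p \<in> interior {-1..0::real}" using assms by (simp add: interior_atLeastAtMost_real)
  have d: "((\<lambda>y. pd ds w q y) has_real_derivative pd (False#ds) w q p) (at p within {-1..0})"
    by (rule dpw) (use assms in auto)
  then show ?thesis by (simp only: at_within_interior[OF i])
qed

lemma cw: assumes "length ds \<le> 3"
  shows "continuous_on (UNIV \<times> {-1..0}) (\<lambda>z. pd ds w (fst z) (snd z))"
  using hs2[OF assms, THEN conjunct1] unfolding strip_cl_eq by (simp add: case_prod_beta)

lemma bw: assumes "length ds \<le> 3"
  shows "\<exists>K. \<forall>q p. -1 \<le> p \<and> p \<le> 0 \<longrightarrow> \<bar>pd ds w q p\<bar> \<le> K"
proof -
  have "bounded ((\<lambda>(q,p). pd ds w q p) ` strip_cl)"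
    using hs2[OF assms, THEN conjunct2] .
  then obtain K where K: "\<forall>x\<in>(\<lambda>(q,p). pd ds w q p) ` strip_cl. norm x \<le> K"
    by (auto simp: bounded_iff)
  show ?thesis
    by (rule exI[of _ K]) (use K in \<open>auto simp: strip_cl_def\<close>)
qed

lemma dH: assumes "-1 \<le> p" "p \<le> 0"
  shows "(H has_real_derivative dP H p) (at p within {-1..0})"
proof -
  have A: "\<forall>n<3. \<forall>p\<in>{-1..0}. ((dP ^^ n) H) differentiable (at p within {-1..0})"
    using Hh unfolding holder_int_def by auto
  have "((dP ^^ 0) H) differentiable (at p within {-1..0})" using A[rule_format, of 0 p] assms by simp
  then show ?thesis unfolding has_real_derivative_iff_has_vector_derivative
    by (simp add: dP_def vector_derivative_works[symmetric])
qed

lemma ddH: assumes "-1 \<le> p" "p \<le> 0"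
  shows "(dP H has_real_derivative dP (dP H) p) (at p within {-1..0})"
proof -
  have A: "\<forall>n<3. \<forall>p\<in>{-1..0}. ((dP ^^ n) H) differentiable (at p within {-1..0})"
    using Hh unfolding holder_int_def by auto
  have "((dP ^^ 1) H) differentiable (at p within {-1..0})" using A[rule_format, of 1 p] assms by simp
  then show ?thesis unfolding has_real_derivative_iff_has_vector_derivative
    by (simp add: dP_def[of "dP H"] vector_derivative_works[symmetric])
qed

lemma cH: "continuous_on {-1..0} (dP H)"
proof -
  have A: "\<forall>n\<le>3. continuous_on {-1..0} ((dP ^^ n) H)" using Hh unfolding holder_int_def by auto
  have "continuous_on {-1..0} ((dP ^^ 1) H)" using A[rule_format, of 1] by simp
  then show ?thesis by simp
qed

lemma cR: "continuous_on {-1..0} (dP \<rho>)"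
proof -
  have A: "\<forall>n\<le>2. continuous_on {-1..0} ((dP ^^ n) \<rho>)" using rho unfolding holder_int_def by auto
  have "continuous_on {-1..0} ((dP ^^ 1) \<rho>)" using A[rule_format, of 1] by simp
  then show ?thesis by simp
qed


lemma cont_slice:
  assumes "continuous_on (UNIV \<times> S) (\<lambda>z. f (fst z) (snd z))"
  shows "continuous_on S (\<lambda>y. f q y)"
proof -
  have "continuous_on S ((\<lambda>z. f (fst z) (snd z)) \<circ> (\<lambda>y. (q, y)))"
    by (rule continuous_on_compose) (auto intro!: continuous_intros continuous_on_subset[OF assms])
  then show ?thesis by (simp add: o_def)
qed

lemma cHz: "continuous_on (UNIV \<times> {-1..0}) (\<lambda>z. dP H (snd z))"
  by (rule continuous_on_compose2[OF cH]) (auto intro!: continuous_intros)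

lemma cRz: "continuous_on (UNIV \<times> {-1..0}) (\<lambda>z. dP \<rho> (snd z))"
  by (rule continuous_on_compose2[OF cR]) (auto intro!: continuous_intros)

lemmas cw0 = cw[of "[]", simplified]
lemmas cwq = cw[of "[True]", simplified]
lemmas cwp = cw[of "[False]", simplified]
lemmas cwqq = cw[of "[True,True]", simplified]
lemmas cwqp = cw[of "[True,False]", simplified]
lemmas cwpq = cw[of "[False,True]", simplified]

lemmas dwq = dq[of "[]", simplified]
lemmas daq = dq[of "[True]", simplified]
lemmas dbq = dq[of "[False]", simplified]
lemmas dwp = dpw[of "[]", simplified]
lemmas dap = dpw[of "[True]", simplified]
lemmas dbp = dpw[of "[False]", simplified]

definition b :: "real \<Rightarrow> real \<Rightarrow> real" where "b q p = dP H p + pp w q p"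

lemma pq_h: assumes "-1 \<le> p" "p \<le> 0"
  shows "pq (\<lambda>q p. H p + w q p) q p = pq w q p"
proof -
  have "((\<lambda>x. H p + w x p) has_real_derivative 0 + pq w q p) (at q)"
    by (intro derivative_intros dwq) (use assms in auto)
  then show ?thesis unfolding pq_def[of "\<lambda>q p. H p + w q p"] by (simp add: DERIV_imp_deriv)
qed

lemma pp_h: assumes "-1 \<le> p" "p \<le> 0"
  shows "pp (\<lambda>q p. H p + w q p) q p = b q p"
proof -
  have "((\<lambda>y. H y + w q y) has_real_derivative dP H p + pp w q p) (at p within {-1..0})"
    by (intro derivative_intros dwp dH) (use assms in auto)
  then show ?thesis unfolding pp_def[of "\<lambda>q p. H p + w q p"] b_def
    by (intro vector_derivative_within_closed_interval)
       (use assms in \<open>auto simp: has_real_derivative_iff_has_vector_derivative\<close>)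
qed

lemma cbz: "continuous_on (UNIV \<times> {-1..0}) (\<lambda>z. b (fst z) (snd z))"
  unfolding b_def by (intro continuous_intros cHz cwp)

lemmas Eu = E[unfolded height_eq_def Let_def]
lemma Fnz: "F \<noteq> 0" using Eu by blast
lemma pos: "\<exists>c>0. \<forall>q p. -1 < p \<and> p < 0 \<longrightarrow> c \<le> pp (\<lambda>q p. H p + w q p) q p"
  using Eu by blast
lemma topbc: "(1 + (pq (\<lambda>q p. H p + w q p) q 0)^2) / (2 * (pp (\<lambda>q p. H p + w q p) q 0)^2)
   - 1 / (2 * (dP H 0)^2) + 1 / F^2 * \<rho> 0 * ((H 0 + w q 0) - 1) = 0"
  using Eu by blast

lemma w_bot: "w q (-1) = 0" using X unfolding in_X_def by blast

lemma w_even: "-1 \<le> p \<Longrightarrow> p \<le> 0 \<Longrightarrow> w (-q) p = w q p" using X unfolding in_X_def by blast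

definition c0 where "c0 = (SOME c. c > 0 \<and> (\<forall>q p. -1 < p \<and> p < 0 \<longrightarrow> c \<le> pp (\<lambda>q p. H p + w q p) q p))"

lemma c0: "c0 > 0" "\<And>q p. -1 < p \<Longrightarrow> p < 0 \<Longrightarrow> c0 \<le> pp (\<lambda>q p. H p + w q p) q p"
  using someI_ex[OF pos] unfolding c0_def by auto

lemma b_pos: assumes "-1 \<le> p" "p \<le> 0" shows "c0 \<le> b q p"
proof -
  have cl: "closure {-1<..<0::real} = {-1..0}" by (rule closure_greaterThanLessThan) simp
  show ?thesis
  proof (rule continuous_ge_on_closure[where S="{-1<..<0}" and f="b q"])
    show "continuous_on (closure {-1<..<0}) (b q)" unfolding cl
      using cont_slice[OF cbz, of q] by simp
    show "p \<in> closure {-1<..<0}" unfolding cl using assms by simp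
    fix x :: real assume "x \<in> {-1<..<0}"
    then show "c0 \<le> b q x" using c0(2)[of x q] pp_h[of x q] by auto
  qed
qed

lemma b_nz: "-1 \<le> p \<Longrightarrow> p \<le> 0 \<Longrightarrow> b q p \<noteq> 0"
  using b_pos[of p q] c0(1) by auto

lemma Hp_nz: "-1 \<le> p \<Longrightarrow> p \<le> 0 \<Longrightarrow> dP H p \<noteq> 0"
  using Hp by force


lemma cont_ed:
  fixes q p :: real and g :: "real \<Rightarrow> real \<Rightarrow> real"
  assumes c: "continuous_on (UNIV \<times> {-1..0}) (\<lambda>z. g (fst z) (snd z))"
    and p: "-1 < p" "p < 0" and e: "e > 0"
  shows "\<exists>d>0. \<forall>x y. \<bar>x - q\<bar> < d \<and> \<bar>y - p\<bar> < d \<longrightarrow> \<bar>g x y - g q p\<bar> < e"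
proof -
  have "(q,p) \<in> UNIV \<times> {-1..0::real}" using p by auto
  then obtain d0 where d0: "d0 > 0" "\<forall>z\<in>UNIV \<times> {-1..0}. dist z (q,p) < d0 \<longrightarrow>
      dist (g (fst z) (snd z)) (g q p) < e"
    using c e unfolding continuous_on_iff by fastforce
  define d where "d = min (d0/2) (min (p+1) (-p))"
  have dd: "d > 0" "d \<le> d0/2" "d \<le> p + 1" "d \<le> -p" using d0(1) p unfolding d_def by linarith+
  show ?thesis
  proof (intro exI[of _ d] conjI allI impI)
    show "d > 0" by fact
    fix x y assume xy: "\<bar>x - q\<bar> < d \<and> \<bar>y - p\<bar> < d"
    have "(x,y) \<in> UNIV \<times> {-1..0}" using xy dd by auto
    moreover have "dist (x,y) (q,p) < d0"
    proof -
      have "dist (x,y) (q,p) = sqrt ((x-q)^2 + (y-p)^2)" by (simp add: dist_Pair_Pair dist_real_def)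
      also have "\<dots> \<le> \<bar>x-q\<bar> + \<bar>y-p\<bar>" by (rule sqrt_sum_squares_le_sum_abs)
      finally show ?thesis using xy dd by linarith
    qed
    ultimately show "\<bar>g x y - g q p\<bar> < e" using d0(2) by (auto simp: dist_real_def)
  qed
qed

lemma clair: assumes "-1 < p" "p < 0" shows "pp (pq w) q p = pq (pp w) q p"
proof (rule clairaut[where lo="-1" and hi=0 and f=w and fx="pq w" and fy="pp w" and fxy="pp (pq w)" and fyx="pq (pp w)"])
  show "-1 < p" "p < 0" by fact+
  fix x y :: real assume y: "-1 < y" "y < 0"
  show "((\<lambda>x. w x y) has_real_derivative pq w x y) (at x)" using dwq y by simp
  show "((\<lambda>y. w x y) has_real_derivative pp w x y) (at y)" using dpa[of "[]" y x] y by simp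
  show "((\<lambda>y. pq w x y) has_real_derivative pp (pq w) x y) (at y)" using dpa[of "[True]" y x] y by simp
  show "((\<lambda>x. pp w x y) has_real_derivative pq (pp w) x y) (at x)" using dbq y by simp
next
  fix e :: real assume "e > 0"
  then show "\<exists>d>0. \<forall>x y. \<bar>x - q\<bar> < d \<and> \<bar>y - p\<bar> < d \<longrightarrow> \<bar>pp (pq w) x y - pp (pq w) q p\<bar> < e"
    using cont_ed[OF cwpq assms] by simp
next
  fix e :: real assume "e > 0"
  then show "\<exists>d>0. \<forall>x y. \<bar>x - q\<bar> < d \<and> \<bar>y - p\<bar> < d \<longrightarrow> \<bar>pq (pp w) x y - pq (pp w) q p\<bar> < e"
    using cont_ed[OF cwqp assms] by simp
qed


definition Av where "Av q p = -(1 + (pq w q p)^2)/(2*(b q p)^2) + 1/(2*(dP H p)^2)"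
definition Ap where "Ap q p = -(pq w q p * pp (pq w) q p)/(b q p)^2
   + (1 + (pq w q p)^2) * (dP (dP H) p + pp (pp w) q p)/(b q p)^3 - dP (dP H) p/(dP H p)^3"
definition Bq where "Bq q p = pq (pq w) q p / b q p - pq w q p * pq (pp w) q p / (b q p)^2"

lemma Av_deriv: assumes "-1 \<le> p" "p \<le> 0"
  shows "((\<lambda>y. Av q y) has_real_derivative Ap q p) (at p within {-1..0})"
proof -
  have bnz: "dP H p + pp w q p \<noteq> 0" using b_nz[OF assms, of q] by (simp add: b_def)
  have hnz: "dP H p \<noteq> 0" using Hp_nz[OF assms] .
  define B where "B = dP H p + pp w q p"
  have nz1: "2 * (dP H p + pp w q p)^2 \<noteq> 0" "2 * (dP H p)^2 \<noteq> 0" using bnz hnz by auto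
  show ?thesis unfolding Av_def[abs_def] b_def Ap_def
    apply (rule derivative_eq_intros refl dap[OF assms] dbp[OF assms] ddH[OF assms] nz1)+
    apply (fold B_def)
    using bnz hnz unfolding B_def[symmetric] apply (simp add: field_simps power2_eq_square power3_eq_cube)
    done
qed


lemma pdeE: "\<forall>q p. -1 < p \<and> p < 0 \<longrightarrow>
   pp (\<lambda>q p. - (1 + (pq (\<lambda>q p. H p + w q p) q p)^2) / (2 * (pp (\<lambda>q p. H p + w q p) q p)^2)
         + 1 / (2 * (dP H p)^2)) q p
   + pq (\<lambda>q p. pq (\<lambda>q p. H p + w q p) q p / pp (\<lambda>q p. H p + w q p) q p) q p
   - 1 / F^2 * dP \<rho> p * ((H p + w q p) - H p) = 0"
  using Eu by blast

lemma ppA: assumes "-1 \<le> p" "p \<le> 0"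
  shows "pp (\<lambda>q p. - (1 + (pq (\<lambda>q p. H p + w q p) q p)^2) / (2 * (pp (\<lambda>q p. H p + w q p) q p)^2)
         + 1 / (2 * (dP H p)^2)) q p = Ap q p"
proof -
  have "((\<lambda>y. - (1 + (pq (\<lambda>q p. H p + w q p) q y)^2) / (2 * (pp (\<lambda>q p. H p + w q p) q y)^2)
         + 1 / (2 * (dP H y)^2)) has_real_derivative Ap q p) (at p within {-1..0})"
  proof (rule has_field_derivative_transform_within[OF Av_deriv[OF assms] zero_less_one])
    show "p \<in> {-1..0}" using assms by simp
    fix y :: real assume "y \<in> {-1..0}" "dist y p < 1"
    then show "Av q y = - (1 + (pq (\<lambda>q p. H p + w q p) q y)^2) / (2 * (pp (\<lambda>q p. H p + w q p) q y)^2)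
         + 1 / (2 * (dP H y)^2)" by (simp add: Av_def pq_h pp_h)
  qed
  then show ?thesis unfolding pp_def
    by (intro vector_derivative_within_closed_interval)
       (use assms in \<open>auto simp: has_real_derivative_iff_has_vector_derivative\<close>)
qed

lemma pqB: assumes "-1 \<le> p" "p \<le> 0"
  shows "pq (\<lambda>q p. pq (\<lambda>q p. H p + w q p) q p / pp (\<lambda>q p. H p + w q p) q p) q p = Bq q p"
proof -
  have e: "(\<lambda>x. pq (\<lambda>q p. H p + w q p) x p / pp (\<lambda>q p. H p + w q p) x p) = (\<lambda>x. pq w x p / (dP H p + pp w x p))"
    using assms by (simp add: pq_h pp_h b_def)
  define B where "B = dP H p + pp w q p"
  have nz: "dP H p + pp w q p \<noteq> 0" using b_nz[OF assms, of q] by (simp add: b_def)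
  have "((\<lambda>x. pq w x p / (dP H p + pp w x p)) has_real_derivative Bq q p) (at q)"
    unfolding Bq_def b_def
    apply (rule derivative_eq_intros refl daq[OF assms] dbq[OF assms] nz)+
    apply (fold B_def)
    using nz unfolding B_def[symmetric] apply (simp add: field_simps power2_eq_square)
    done
  then show ?thesis unfolding pq_def[of "\<lambda>q p. pq (\<lambda>q p. H p + w q p) q p / pp (\<lambda>q p. H p + w q p) q p"] e
    by (rule DERIV_imp_deriv)
qed

lemma pde: assumes "-1 < p" "p < 0"
  shows "Ap q p + Bq q p - 1 / F^2 * dP \<rho> p * w q p = 0"
  using pdeE[rule_format, of p q] assms ppA[of p q] pqB[of p q] by simp


definition T where "T q p = (pq w q p)^2/(2*b q p) - (pp w q p)^2/(2*b q p*(dP H p)^2)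
   - dP \<rho> p*(w q p)^2/(2*F^2)"
definition Tq where "Tq q p = pq w q p * pq (pq w) q p / b q p
   - (pq w q p)^2 * pq (pp w) q p / (2*(b q p)^2)
   - pp w q p * pq (pp w) q p / (b q p * (dP H p)^2)
   + (pp w q p)^2 * pq (pp w) q p / (2*(b q p)^2*(dP H p)^2)
   - dP \<rho> p * w q p * pq w q p / F^2"
definition G where "G q p = pq w q p * Av q p"

lemma T_deriv: assumes "-1 \<le> p" "p \<le> 0"
  shows "((\<lambda>x. T x p) has_real_derivative Tq q p) (at q)"
proof -
  define B where "B = dP H p + pp w q p"
  have bnz: "B \<noteq> 0" using b_nz[OF assms, of q] by (simp add: b_def B_def)
  have hnz: "dP H p \<noteq> 0" using Hp_nz[OF assms] .
  have nz: "2 * (dP H p + pp w q p) \<noteq> 0" "2 * (dP H p + pp w q p) * (dP H p)^2 \<noteq> 0" "2 * F^2 \<noteq> 0"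
    using bnz hnz Fnz by (auto simp: B_def)
  show ?thesis unfolding T_def[abs_def] Tq_def b_def
    apply (rule derivative_eq_intros refl dwq[OF assms] daq[OF assms] dbq[OF assms] nz)+
    apply (fold B_def)
    using bnz hnz Fnz apply (simp add: field_simps power2_eq_square)
    done
qed

lemma alg: fixes B h FF a aq bq P r ww :: real
  assumes "B \<noteq> 0" "h \<noteq> 0" "FF \<noteq> 0" "B = h + P"
  shows "bq*(-(1+a^2)/(2*B^2) + 1/(2*h^2)) + a*(-(aq/B - a*bq/B^2) + 1/FF^2*r*ww)
    = -(a*aq/B - a^2*bq/(2*B^2) - P*bq/(B*h^2) + P^2*bq/(2*B^2*h^2) - r*ww*a/FF^2)"
proof -
  have P: "P = B - h" using assms(4) by simp
  show ?thesis unfolding P using assms(1-3)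
    by (simp add: field_simps power2_eq_square)
qed

lemma G_deriv: assumes "-1 < p" "p < 0"
  shows "((\<lambda>y. G q y) has_real_derivative - Tq q p) (at p)"
proof -
  have i: "p \<in> interior {-1..0::real}" using assms by (simp add: interior_atLeastAtMost_real)
  have dA: "((\<lambda>y. Av q y) has_real_derivative Ap q p) (at p)"
    using Av_deriv[of p q] assms by (simp add: at_within_interior[OF i])
  have da: "((\<lambda>y. pq w q y) has_real_derivative pp (pq w) q p) (at p)"
    using dpa[of "[True]" p q] assms by simp
  have "((\<lambda>y. pq w q y * Av q y) has_real_derivative pp (pq w) q p * Av q p + pq w q p * Ap q p) (at p)"
    using DERIV_mult[OF da dA] by (simp add: algebra_simps)
  moreover have "pp (pq w) q p * Av q p + pq w q p * Ap q p = - Tq q p"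
  proof -
    have Ap: "Ap q p = - Bq q p + 1 / F^2 * dP \<rho> p * w q p" using pde[OF assms, of q] by simp
    show ?thesis unfolding Ap clair[OF assms] Av_def Bq_def Tq_def
      by (rule alg) (use b_nz[of p q] Hp_nz[of p] Fnz assms in \<open>auto simp: b_def\<close>)
  qed
  ultimately show ?thesis unfolding G_def by simp
qed


lemma bnz_z: "z \<in> UNIV \<times> {-1..0} \<Longrightarrow> dP H (snd z) + pp w (fst z) (snd z) \<noteq> 0"
  using b_nz[of "snd z" "fst z"] by (auto simp: b_def)
lemma hnz_z: "z \<in> UNIV \<times> {-1..0} \<Longrightarrow> dP H (snd z) \<noteq> 0"
  using Hp_nz[of "snd z"] by auto

lemma bnz_s: "-1 \<le> y \<Longrightarrow> y \<le> 0 \<Longrightarrow> (dP H y + pp w x y = 0) = False"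
  "-1 \<le> y \<Longrightarrow> y \<le> 0 \<Longrightarrow> (2 * dP H y + 2 * pp w x y = 0) = False"
  "-1 \<le> y \<Longrightarrow> y \<le> 0 \<Longrightarrow> (dP H y = 0) = False"
  using b_nz[of y x] Hp_nz[of y] by (auto simp: b_def)

lemma cTz: "continuous_on (UNIV \<times> {-1..0}) (\<lambda>z. T (fst z) (snd z))"
  unfolding T_def b_def
  by (intro continuous_intros cw0 cwq cwp cHz cRz) (auto simp: Fnz bnz_s)

lemma cTqz: "continuous_on (UNIV \<times> {-1..0}) (\<lambda>z. Tq (fst z) (snd z))"
  unfolding Tq_def b_def
  by (intro continuous_intros cw0 cwq cwp cwqq cwqp cHz cRz) (auto simp: Fnz bnz_s)

lemma cGz: "continuous_on (UNIV \<times> {-1..0}) (\<lambda>z. G (fst z) (snd z))"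
  unfolding G_def Av_def b_def
  by (intro continuous_intros cw0 cwq cwp cHz) (auto simp: bnz_s)


lemma cT: "continuous_on {-1..0} (T q)" using cont_slice[OF cTz, of q] by simp
lemma cG: "continuous_on {-1..0} (G q)" using cont_slice[OF cGz, of q] by simp

lemma a_bot: "pq w q (-1) = 0"
proof -
  have "(\<lambda>x. w x (-1)) = (\<lambda>x. 0)" by (simp add: w_bot)
  then show ?thesis unfolding pq_def by (simp add: DERIV_imp_deriv[OF DERIV_const])
qed

lemma Av_top: "Av q 0 = 1 / F^2 * \<rho> 0 * w q 0"
proof -
  have "(1 + (pq w q 0)^2) / (2 * (b q 0)^2) - 1 / (2 * (dP H 0)^2) + 1 / F^2 * \<rho> 0 * w q 0 = 0"
    using topbc[of q] pq_h[of 0 q] pp_h[of 0 q] H0 by simp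
  then show ?thesis unfolding Av_def minus_divide_left[symmetric] by linarith
qed

lemma intTq: "integral {-1..0} (Tq q) = G q (-1) - G q 0"
proof -
  have "((\<lambda>p. - Tq q p) has_integral G q 0 - G q (-1)) {-1..0}"
    by (rule fundamental_theorem_of_calculus_interior)
       (auto simp: cG has_real_derivative_iff_has_vector_derivative[symmetric] intro!: G_deriv)
  then have "((\<lambda>p. - (- Tq q p)) has_integral - (G q 0 - G q (-1))) {-1..0}"
    by (rule has_integral_neg)
  then show ?thesis by (simp add: integral_unique)
qed

definition Phi where "Phi q = integral {-1..0} (T q) + \<rho> 0 * (w q 0)^2 / (2*F^2)"

lemma Phi_deriv: "(Phi has_real_derivative 0) (at q)"
proof -
  have "((\<lambda>x. integral (cbox (-1) 0) (T x)) has_real_derivative integral (cbox (-1) 0) (Tq q)) (at q within UNIV)"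
  proof (rule leibniz_rule_field_derivative)
    fix x t :: real assume "x \<in> UNIV" "t \<in> cbox (-1) 0"
    then show "((\<lambda>x. T x t) has_real_derivative Tq x t) (at x within UNIV)"
      using T_deriv[of t x] by simp
  next
    fix x :: real
    show "T x integrable_on cbox (-1) 0" using cT[of x] by (simp add: integrable_continuous_interval)
  next
    show "continuous_on (UNIV \<times> cbox (-1) 0) (\<lambda>(x, t). Tq x t)"
      using cTqz by (simp add: case_prod_beta)
  qed auto
  then have d1: "((\<lambda>x. integral {-1..0} (T x)) has_real_derivative G q (-1) - G q 0) (at q)"
    by (simp add: intTq)
  have d2: "((\<lambda>x. \<rho> 0 * (w x 0)^2 / (2*F^2)) has_real_derivative \<rho> 0 * (2 * w q 0 * pq w q 0) / (2*F^2)) (at q)"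
    using Fnz by (intro derivative_eq_intros refl dwq) (auto simp: field_simps power2_eq_square intro!: dwq)
  have "(Phi has_real_derivative (G q (-1) - G q 0) + \<rho> 0 * (2 * w q 0 * pq w q 0) / (2*F^2)) (at q)"
    unfolding Phi_def[abs_def] by (rule DERIV_add[OF d1 d2])
  moreover have "(G q (-1) - G q 0) + \<rho> 0 * (2 * w q 0 * pq w q 0) / (2*F^2) = 0"
    unfolding G_def a_bot Av_top using Fnz by (simp add: field_simps)
  ultimately show ?thesis by simp
qed

lemma Phi_const: "Phi x = Phi y"
  using Phi_deriv by (intro DERIV_isconst_all) auto


lemma dec: assumes "length ds \<le> 2" "e > 0"
  shows "\<exists>M. \<forall>q p. M \<le> \<bar>q\<bar> \<and> -1 \<le> p \<and> p \<le> 0 \<longrightarrow> \<bar>pd ds w q p\<bar> < e"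
proof -
  have "\<forall>ds. length ds \<le> 2 \<longrightarrow> (\<forall>\<epsilon>>0. \<exists>M. \<forall>q p. M \<le> \<bar>q\<bar> \<and> -1 \<le> p \<and> p \<le> 0 \<longrightarrow>
        \<bar>pd ds w q p\<bar> < \<epsilon>)" using X unfolding in_X_def by blast
  then show ?thesis using assms by blast
qed

lemma Phi0: "Phi 0 = 0"
proof -
  obtain x0 where x0: "x0 \<in> {-1..0}" "\<forall>y\<in>{-1..0}. dP H x0 \<le> dP H y"
    using continuous_attains_inf[OF compact_Icc _ cH] by auto
  define m where "m = dP H x0"
  have m: "m > 0" "\<And>p. p \<in> {-1..0} \<Longrightarrow> m \<le> dP H p" using x0 Hp unfolding m_def by auto
  have cr: "continuous_on {-1..0} (\<lambda>p. \<bar>dP \<rho> p\<bar>)" by (intro continuous_intros cR)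
  obtain x1 where x1: "x1 \<in> {-1..0}" "\<forall>y\<in>{-1..0}. \<bar>dP \<rho> y\<bar> \<le> \<bar>dP \<rho> x1\<bar>"
    using continuous_attains_sup[OF compact_Icc _ cr] by auto
  define K where "K = \<bar>dP \<rho> x1\<bar>"
  have K: "K \<ge> 0" "\<And>p. p \<in> {-1..0} \<Longrightarrow> \<bar>dP \<rho> p\<bar> \<le> K" using x1 unfolding K_def by auto
  define C1 where "C1 = 1/(2*c0) + 1/(2*c0*m^2) + K/(2*F^2)"
  define C where "C = C1 + \<bar>\<rho> 0\<bar>/(2*F^2)"
  have C1: "C1 \<ge> 0" using c0(1) m(1) K(1) unfolding C1_def by auto
  have C: "C \<ge> 0" using C1 unfolding C_def by auto
  have bnd: "\<bar>Phi 0\<bar> \<le> e^2 * C" if e: "e > 0" for e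
  proof -
    obtain M1 where M1: "\<forall>q p. M1 \<le> \<bar>q\<bar> \<and> -1 \<le> p \<and> p \<le> 0 \<longrightarrow> \<bar>w q p\<bar> < e"
      using dec[of "[]" e] e by auto
    obtain M2 where M2: "\<forall>q p. M2 \<le> \<bar>q\<bar> \<and> -1 \<le> p \<and> p \<le> 0 \<longrightarrow> \<bar>pq w q p\<bar> < e"
      using dec[of "[True]" e] e by auto
    obtain M3 where M3: "\<forall>q p. M3 \<le> \<bar>q\<bar> \<and> -1 \<le> p \<and> p \<le> 0 \<longrightarrow> \<bar>pp w q p\<bar> < e"
      using dec[of "[False]" e] e by auto
    define q where "q = \<bar>M1\<bar> + \<bar>M2\<bar> + \<bar>M3\<bar>"
    have q: "M1 \<le> \<bar>q\<bar>" "M2 \<le> \<bar>q\<bar>" "M3 \<le> \<bar>q\<bar>" unfolding q_def by auto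
    have Tb: "\<bar>T q p\<bar> \<le> e^2 * C1" if p: "p \<in> {-1..0}" for p
      unfolding T_def C1_def
      by (rule ineq) (use p M1 M2 M3 q c0(1) m K b_pos[of p q] Fnz in \<open>auto simp: b_def less_imp_le\<close>)
    have "\<bar>integral {-1..0} (T q)\<bar> \<le> e^2 * C1 * (0 - -1)"
      using integral_bound[OF _ cT[of q], of "e^2 * C1"] Tb by simp
    moreover have "\<bar>\<rho> 0 * (w q 0)^2 / (2*F^2)\<bar> \<le> \<bar>\<rho> 0\<bar> * e^2 / (2*F^2)"
    proof -
      have "(w q 0)^2 \<le> e^2" using M1 q(1) by (metis abs_ge_zero order_trans less_imp_le power2_abs power_mono
          atLeastAtMost_iff le_minus_one_simps(1) order_refl)
      then show ?thesis by (simp add: abs_mult divide_right_mono mult_left_mono)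
    qed
    ultimately have "\<bar>Phi q\<bar> \<le> e^2 * C1 + \<bar>\<rho> 0\<bar> * e^2 / (2*F^2)"
      unfolding Phi_def
      using abs_triangle_ineq[of "integral {-1..0} (T q)" "\<rho> 0 * (w q 0)^2 / (2*F^2)"] by simp
    then show ?thesis using Phi_const[of 0 q] unfolding C_def by (simp add: algebra_simps)
  qed
  show ?thesis
  proof (rule ccontr)
    assume ne: "Phi 0 \<noteq> 0"
    define e where "e = sqrt (\<bar>Phi 0\<bar> / (C + 1))"
    have e: "e > 0" using ne C unfolding e_def by auto
    have e2: "e^2 = \<bar>Phi 0\<bar> / (C + 1)" unfolding e_def using C by simp
    have "\<bar>Phi 0\<bar> \<le> \<bar>Phi 0\<bar> / (C + 1) * C" using bnd[OF e] e2 by simp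
    moreover have "\<bar>Phi 0\<bar> / (C + 1) * C < \<bar>Phi 0\<bar>" using ne C by (simp add: field_simps)
    ultimately show False by linarith
  qed
qed


lemma a0: assumes "-1 \<le> p" "p \<le> 0" shows "pq w 0 p = 0"
proof -
  have d: "((\<lambda>x. w x p) has_real_derivative pq w 0 p) (at (- 0))" using dwq[OF assms, of 0] by simp
  then have "((\<lambda>x. w (- x) p) has_real_derivative - pq w 0 p) (at 0)"
    using DERIV_mirror[where f="\<lambda>x. w x p" and x=0 and y="pq w 0 p"] by simp
  moreover have "(\<lambda>x. w (- x) p) = (\<lambda>x. w x p)" using w_even[OF assms] by auto
  ultimately have "((\<lambda>x. w x p) has_real_derivative - pq w 0 p) (at 0)" by simp
  from DERIV_unique[OF this dwq[OF assms, of 0]] show ?thesis by simp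
qed

lemma main:
  "1 / F^2 * (integral {-1..0} (\<lambda>p. \<bar>dP \<rho> p\<bar> * (w 0 p)^2) + \<rho> 0 * (w 0 0)^2)
     = integral {-1..0} (\<lambda>p. (pp w 0 p)^2 / ((dP H p)^2 * pp (\<lambda>q p. H p + w q p) 0 p))"
proof -
  define X where "X p = (pp w 0 p)^2 / ((dP H p)^2 * b 0 p)" for p
  define Y where "Y p = dP \<rho> p * (w 0 p)^2" for p
  have I1: "integral {-1..0} (\<lambda>p. (pp w 0 p)^2 / ((dP H p)^2 * pp (\<lambda>q p. H p + w q p) 0 p))
      = integral {-1..0} X"
    by (rule integral_cong) (auto simp: X_def pp_h)
  have I2: "integral {-1..0} (\<lambda>p. \<bar>dP \<rho> p\<bar> * (w 0 p)^2) = - integral {-1..0} Y"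
  proof -
    have "integral {-1..0} (\<lambda>p. \<bar>dP \<rho> p\<bar> * (w 0 p)^2) = integral {-1..0} (\<lambda>p. - Y p)"
      by (rule integral_cong) (use rhop in \<open>auto simp: Y_def\<close>)
    then show ?thesis by simp
  qed
  have cX: "continuous_on {-1..0} X" unfolding X_def b_def
    by (intro continuous_intros cont_slice[OF cwp] cH) (auto simp: bnz_s)
  have cY: "continuous_on {-1..0} Y" unfolding Y_def
    by (intro continuous_intros cont_slice[OF cw0] cR)
  have hX: "(X has_integral integral {-1..0} X) {-1..0}"
    using integrable_continuous_interval[OF cX] by (rule integrable_integral)
  have hY: "(Y has_integral integral {-1..0} Y) {-1..0}"
    using integrable_continuous_interval[OF cY] by (rule integrable_integral)
  have "((\<lambda>p. (-1/2) * X p + (- 1/(2*F^2)) * Y p) has_integral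
       (-1/2) * integral {-1..0} X + (- 1/(2*F^2)) * integral {-1..0} Y) {-1..0}"
    by (intro has_integral_add has_integral_mult_right hX hY)
  moreover have "(-1/2) * X p + (- 1/(2*F^2)) * Y p = T 0 p" if "p \<in> {-1..0}" for p
    using that a0[of p] b_nz[of p 0] Hp_nz[of p] Fnz
    by (auto simp: X_def Y_def T_def field_simps)
  ultimately have "(T 0 has_integral
       (-1/2) * integral {-1..0} X + (- 1/(2*F^2)) * integral {-1..0} Y) {-1..0}"
    using has_integral_cong by (metis (no_types, lifting))
  then have IT: "integral {-1..0} (T 0) = (-1/2) * integral {-1..0} X + (- 1/(2*F^2)) * integral {-1..0} Y"
    by (rule integral_unique)
  have "integral {-1..0} (T 0) + \<rho> 0 * (w 0 0)^2 / (2*F^2) = 0" using Phi0 unfolding Phi_def .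
  then show ?thesis unfolding I1 I2 IT using Fnz by (simp add: field_simps)
qed

end

theorem lemma4p6:
  fixes \<alpha> F :: real and \<rho> H :: "real \<Rightarrow> real" and w :: "real \<Rightarrow> real \<Rightarrow> real"
  assumes "0 < \<alpha>" "\<alpha> < 1"
    and "holder_int 2 \<alpha> \<rho>" "\<forall>p\<in>{-1..0}. \<rho> p > 0" "\<forall>p\<in>{-1..0}. dP \<rho> p \<le> 0"
    and "holder_int 3 \<alpha> H" "H (-1) = 0" "H 0 = 1" "\<forall>p\<in>{-1..0}. dP H p > 0"
    and "in_X \<alpha> w"
    and "height_eq \<rho> H w F"
  shows "1 / F^2 * (integral {-1..0} (\<lambda>p. \<bar>dP \<rho> p\<bar> * (w 0 p)^2) + \<rho> 0 * (w 0 0)^2)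
         = integral {-1..0} (\<lambda>p. (pp w 0 p)^2 / ((dP H p)^2 * pp (\<lambda>q p. H p + w q p) 0 p))"
proof -
  interpret hsetup \<alpha> F \<rho> H w
    by unfold_locales (use assms in auto)
  show ?thesis by (rule main)
qed

end
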